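(* Let $n \ge 2$, let $K, L$ be compact convex subsets of $\mathbb{R}^n$, and let $d \in \{1, \dots, n-1\}$. Suppose that for every $(n-d)$-dimensional linear subspace $\xi \subseteq \mathbb{R}^n$, the projection $L_\xi$ contains a translate of $K_\xi$. Then $$V_n(K) \le \left(\tfrac{n}{n-d}\right)^n V_n(L).$$
   Context: For a set $S\subseteq\mathbb{R}^n$ and a linear subspace $\xi$, $S_\xi$ denotes the orthogonal projection of $S$ onto $\xi$. "$A$ contains a translate of $B$" means $B + w \subseteq A$ for some vector $w$. $V_n$ is $n$-dimensional volume. *)

theory Defs
  imports "HOL-Analysis.Analysis"
begin

definition orth_proj :: "'a::euclidean_space set \<Rightarrow> 'a \<Rightarrow> 'a" where
  "orth_proj \<xi> x = (THE y. y \<in> \<xi> \<and> (\<forall>v\<in>\<xi>. orthogonal (x - y) v))"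

definition proj_set :: "'a::euclidean_space set \<Rightarrow> 'a set \<Rightarrow> 'a set" where
  "proj_set \<xi> S = orth_proj \<xi> ` S"

definition contains_translate :: "'a::real_vector set \<Rightarrow> 'a set \<Rightarrow> bool" where
  "contains_translate A B \<longleftrightarrow> (\<exists>w. (\<lambda>x. x + w) ` B \<subseteq> A)"

end

theory Submission
  imports Defs
begin

lemma card_subsets_containing:
  assumes "finite A" "i \<in> A" "1 \<le> k"
  shows "card {I. I \<subseteq> A \<and> card I = k \<and> i \<in> I} = (card A - 1) choose (k - 1)"
proof -
  let ?J = "{J. J \<subseteq> A - {i} \<and> card J = k - 1}"
  have fin: "finite (A - {i})" using assms by simp
  have inj: "inj_on (insert i) ?J"
    unfolding inj_on_def by (metis (no_types, lifting) Diff_insert_absorb mem_Collect_eq subset_Diff_insert)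
  have img: "insert i ` ?J = {I. I \<subseteq> A \<and> card I = k \<and> i \<in> I}"
  proof (intro equalityI subsetI)
    fix I assume "I \<in> insert i ` ?J"
    then obtain J where J: "J \<subseteq> A - {i}" "card J = k - 1" "I = insert i J" by blast
    have "finite J" using J fin finite_subset by blast
    then have "card I = k" using J assms by (simp add: subset_Diff_insert)
    then show "I \<in> {I. I \<subseteq> A \<and> card I = k \<and> i \<in> I}" using J assms by auto
  next
    fix I assume I: "I \<in> {I. I \<subseteq> A \<and> card I = k \<and> i \<in> I}"
    have "finite I" using I assms finite_subset by blast
    then have "I - {i} \<in> ?J" using I by auto
    moreover have "I = insert i (I - {i})" using I by auto
    ultimately show "I \<in> insert i ` ?J" by blast
  qed
  have "card {I. I \<subseteq> A \<and> card I = k \<and> i \<in> I} = card ?J"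
    using card_image[OF inj] img by simp
  also have "\<dots> = card (A - {i}) choose (k - 1)" using n_subsets[OF fin] by simp
  finally show ?thesis using assms by simp
qed

lemma sum_count:
  assumes "finite \<I>" "finite A" "\<And>I. I \<in> \<I> \<Longrightarrow> I \<subseteq> A"
  shows "(\<Sum>I\<in>\<I>. \<Sum>i\<in>I. (f i :: real)) = (\<Sum>i\<in>A. f i * real (card {I\<in>\<I>. i \<in> I}))"
proof -
  have "(\<Sum>I\<in>\<I>. \<Sum>i\<in>I. f i) = (\<Sum>I\<in>\<I>. \<Sum>i\<in>A. if i \<in> I then f i else 0)"
  proof (rule sum.cong[OF refl])
    fix I assume "I \<in> \<I>"
    then have "I \<subseteq> A" using assms by blast
    then have "{i\<in>A. i \<in> I} = I" by blast
    then show "(\<Sum>i\<in>I. f i) = (\<Sum>i\<in>A. if i \<in> I then f i else 0)"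
      using sum.inter_filter[OF assms(2), of f "\<lambda>i. i \<in> I"] by simp
  qed
  also have "\<dots> = (\<Sum>i\<in>A. \<Sum>I\<in>\<I>. if i \<in> I then f i else 0)" by (rule sum.swap)
  also have "\<dots> = (\<Sum>i\<in>A. f i * real (card {I\<in>\<I>. i \<in> I}))"
  proof (rule sum.cong[OF refl])
    fix i
    show "(\<Sum>I\<in>\<I>. if i \<in> I then f i else 0) = f i * real (card {I\<in>\<I>. i \<in> I})"
      using sum.inter_filter[OF assms(1), of "\<lambda>_. f i" "\<lambda>I. i \<in> I"] by (simp add: mult.commute)
  qed
  finally show ?thesis .
qed

lemma sum_count2:
  assumes "finite \<I>" "finite A" "\<And>I. I \<in> \<I> \<Longrightarrow> I \<subseteq> A"
  shows "(\<Sum>I\<in>\<I>. \<Sum>j\<in>A - I. \<Sum>i\<in>I. (g j i :: real))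
       = (\<Sum>j\<in>A. \<Sum>i\<in>A. g j i * real (card {I\<in>\<I>. i \<in> I \<and> j \<notin> I}))"
proof -
  have "(\<Sum>I\<in>\<I>. \<Sum>j\<in>A - I. \<Sum>i\<in>I. g j i)
      = (\<Sum>I\<in>\<I>. \<Sum>j\<in>A. \<Sum>i\<in>A. if i \<in> I \<and> j \<notin> I then g j i else 0)"
  proof (rule sum.cong[OF refl])
    fix I assume "I \<in> \<I>"
    then have IA: "I \<subseteq> A" using assms by blast
    have "(\<Sum>j\<in>A - I. \<Sum>i\<in>I. g j i) = (\<Sum>j\<in>A. if j \<notin> I then (\<Sum>i\<in>I. g j i) else 0)"
      using sum.inter_filter[OF assms(2), of "\<lambda>j. \<Sum>i\<in>I. g j i" "\<lambda>j. j \<notin> I"]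
      by (simp add: set_diff_eq)
    also have "\<dots> = (\<Sum>j\<in>A. \<Sum>i\<in>A. if i \<in> I \<and> j \<notin> I then g j i else 0)"
    proof (rule sum.cong[OF refl])
      fix j
      have "{i\<in>A. i \<in> I} = I" using IA by blast
      then have "(\<Sum>i\<in>I. g j i) = (\<Sum>i\<in>A. if i \<in> I then g j i else 0)"
        using sum.inter_filter[OF assms(2), of "g j" "\<lambda>i. i \<in> I"] by simp
      then show "(if j \<notin> I then (\<Sum>i\<in>I. g j i) else 0) = (\<Sum>i\<in>A. if i \<in> I \<and> j \<notin> I then g j i else 0)"
        by simp
    qed
    finally show "(\<Sum>j\<in>A - I. \<Sum>i\<in>I. g j i) = (\<Sum>j\<in>A. \<Sum>i\<in>A. if i \<in> I \<and> j \<notin> I then g j i else 0)" .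
  qed
  also have "\<dots> = (\<Sum>j\<in>A. \<Sum>I\<in>\<I>. \<Sum>i\<in>A. if i \<in> I \<and> j \<notin> I then g j i else 0)" by (rule sum.swap)
  also have "\<dots> = (\<Sum>j\<in>A. \<Sum>i\<in>A. \<Sum>I\<in>\<I>. if i \<in> I \<and> j \<notin> I then g j i else 0)"
    by (rule sum.cong[OF refl]) (rule sum.swap)
  also have "\<dots> = (\<Sum>j\<in>A. \<Sum>i\<in>A. g j i * real (card {I\<in>\<I>. i \<in> I \<and> j \<notin> I}))"
  proof (intro sum.cong[OF refl])
    fix j i
    show "(\<Sum>I\<in>\<I>. if i \<in> I \<and> j \<notin> I then g j i else 0) = g j i * real (card {I\<in>\<I>. i \<in> I \<and> j \<notin> I})"
      using sum.inter_filter[OF assms(1), of "\<lambda>_. g j i" "\<lambda>I. i \<in> I \<and> j \<notin> I"] by (simp add: mult.commute)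
  qed
  finally show ?thesis .
qed


lemma comb_ineq:
  fixes x v :: "nat \<Rightarrow> 'a::real_inner" and n k :: nat and H :: real
  assumes k: "1 \<le> k" "k \<le> n" and v0: "(\<Sum>i\<in>{0..n}. v i) = 0"
    and hyp: "\<And>I. I \<subseteq> {0..n} \<Longrightarrow> card I = k \<Longrightarrow>
      (\<Sum>i\<in>I. inner (x i) (v i)) - inner ((1 / real (n + 1 - k)) *\<^sub>R (\<Sum>j\<in>{0..n} - I. x j)) (\<Sum>i\<in>I. v i) \<le> H"
  shows "(\<Sum>i\<in>{0..n}. inner (x i) (v i)) \<le> real n / real k * H"
proof -
  define A where "A = {0..n}"
  define \<I> where "\<I> = {I. I \<subseteq> A \<and> card I = k}"
  define m where "m = real (n + 1 - k)"
  define a where "a i = inner (x i) (v i)" for i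
  define b where "b j i = inner (x j) (v i)" for j i
  have fA: "finite A" and cA: "card A = n + 1" unfolding A_def by auto
  have fI: "finite \<I>" unfolding \<I>_def by (rule finite_subset[of _ "Pow A"]) (use fA in auto)
  have IA: "\<And>I. I \<in> \<I> \<Longrightarrow> I \<subseteq> A" unfolding \<I>_def by blast
  have m0: "m > 0" unfolding m_def using k by simp
  have cI: "card \<I> = (n + 1) choose k" unfolding \<I>_def using n_subsets[OF fA] cA by simp
  have c1: "card {I\<in>\<I>. i \<in> I} = n choose (k - 1)" if "i \<in> A" for i
  proof -
    have "{I\<in>\<I>. i \<in> I} = {I. I \<subseteq> A \<and> card I = k \<and> i \<in> I}" unfolding \<I>_def by blast
    then show ?thesis using card_subsets_containing[OF fA that k(1)] cA by simp
  qed
  have c2: "card {I\<in>\<I>. i \<in> I \<and> j \<notin> I} = (if i = j then 0 else (n - 1) choose (k - 1))"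
    if "i \<in> A" "j \<in> A" for i j
  proof (cases "i = j")
    case True then show ?thesis by simp
  next
    case False
    have "{I\<in>\<I>. i \<in> I \<and> j \<notin> I} = {I. I \<subseteq> A - {j} \<and> card I = k \<and> i \<in> I}" unfolding \<I>_def by blast
    moreover have "card (A - {j}) = n" using cA that fA by simp
    ultimately show ?thesis using card_subsets_containing[of "A - {j}" i k] fA that k(1) False by simp
  qed
  have yI: "inner ((1 / m) *\<^sub>R (\<Sum>j\<in>A - I. x j)) (\<Sum>i\<in>I. v i) = (1 / m) * (\<Sum>j\<in>A - I. \<Sum>i\<in>I. b j i)" for I
    unfolding b_def by (simp add: inner_sum_left inner_sum_right sum_divide_distrib[symmetric] sum.swap[of _ I])
  have "(\<Sum>I\<in>\<I>. (\<Sum>i\<in>I. a i) - (1 / m) * (\<Sum>j\<in>A - I. \<Sum>i\<in>I. b j i)) \<le> (\<Sum>I\<in>\<I>. H)"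
  proof (rule sum_mono)
    fix I assume "I \<in> \<I>"
    then show "(\<Sum>i\<in>I. a i) - (1 / m) * (\<Sum>j\<in>A - I. \<Sum>i\<in>I. b j i) \<le> H"
      using hyp[of I] yI[of I] unfolding \<I>_def A_def m_def a_def by auto
  qed
  also have "\<dots> = real ((n + 1) choose k) * H" using cI by simp
  finally have S: "(\<Sum>I\<in>\<I>. \<Sum>i\<in>I. a i) - (1 / m) * (\<Sum>I\<in>\<I>. \<Sum>j\<in>A - I. \<Sum>i\<in>I. b j i)
      \<le> real ((n + 1) choose k) * H"
    by (simp add: sum_subtractf sum_distrib_left)
  have S1: "(\<Sum>I\<in>\<I>. \<Sum>i\<in>I. a i) = real (n choose (k - 1)) * (\<Sum>i\<in>A. a i)"
  proof -
    have "(\<Sum>I\<in>\<I>. \<Sum>i\<in>I. a i) = (\<Sum>i\<in>A. a i * real (n choose (k - 1)))"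
      using sum_count[OF fI fA IA, of a] c1 by simp
    then show ?thesis by (simp add: sum_distrib_right[symmetric] mult.commute)
  qed
  have inner_j: "(\<Sum>i\<in>A. b j i * real (card {I\<in>\<I>. i \<in> I \<and> j \<notin> I}))
      = - real ((n - 1) choose (k - 1)) * a j" if "j \<in> A" for j
  proof -
    have "(\<Sum>i\<in>A. b j i * real (card {I\<in>\<I>. i \<in> I \<and> j \<notin> I}))
        = (\<Sum>i\<in>A. if i = j then 0 else b j i * real ((n - 1) choose (k - 1)))"
      using c2 that by (intro sum.cong) auto
    also have "\<dots> = (\<Sum>i\<in>A - {j}. b j i * real ((n - 1) choose (k - 1)))"
      using sum.inter_filter[OF fA, of "\<lambda>i. b j i * real ((n - 1) choose (k - 1))" "\<lambda>i. i \<noteq> j"]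
      by (simp add: set_diff_eq if_distrib[symmetric] cong: if_cong) (smt (verit, ccfv_SIG) sum.cong)
    also have "\<dots> = real ((n - 1) choose (k - 1)) * inner (x j) (\<Sum>i\<in>A - {j}. v i)"
      unfolding b_def by (simp add: inner_sum_right sum_distrib_left mult.commute)
    also have "(\<Sum>i\<in>A - {j}. v i) = - v j"
      using sum.remove[OF fA that, of v] v0 unfolding A_def by (simp add: eq_neg_iff_add_eq_0 add.commute)
    finally show ?thesis unfolding a_def by simp
  qed
  have S2: "(\<Sum>I\<in>\<I>. \<Sum>j\<in>A - I. \<Sum>i\<in>I. b j i) = - real ((n - 1) choose (k - 1)) * (\<Sum>j\<in>A. a j)"
    using sum_count2[OF fI fA IA, of b] inner_j by (simp add: sum_distrib_left)
  define B0 where "B0 = real ((n + 1) choose k)"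
  define B1 where "B1 = real (n choose (k - 1))"
  define B2 where "B2 = real ((n - 1) choose (k - 1))"
  define s where "s = (\<Sum>i\<in>A. a i)"
  have main: "(B1 + B2 / m) * s \<le> B0 * H"
    using S unfolding S1 S2 B0_def B1_def B2_def s_def by (simp add: algebra_simps)
  have e1: "real k * B0 = real (n + 1) * B1"
    unfolding B0_def B1_def using times_binomial_minus1_eq[of k "n + 1"] k
    by (metis diff_add_inverse2 of_nat_mult less_le_trans zero_less_one)
  have e2: "m * B1 = real n * B2"
    unfolding m_def B1_def B2_def using binomial_absorb_comp[of n "k - 1"] k
    by (metis Nat.diff_diff_right le_add_diff_inverse of_nat_mult add.commute diff_add_inverse le_trans)
  have n0: "real n > 0" and k0: "real k > 0" using k by auto
  have B1p: "B1 > 0" unfolding B1_def using k by simp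
  have "B2 / m = B1 / real n" using e2 m0 n0 by (simp add: field_simps)
  then have "(B1 + B1 / real n) * s \<le> B0 * H" using main by simp
  then have P: "B1 * (real n + 1) * s \<le> B0 * (H * real n)"
    using n0 k0 by (simp add: field_simps)
  have "(B1 * (real n + 1) * s) * real k \<le> (B0 * (H * real n)) * real k"
    by (rule mult_right_mono[OF P]) simp
  then have "(B1 * (real n + 1) * s) * real k \<le> (real k * B0) * (H * real n)"
    by (simp add: algebra_simps)
  then have "(B1 * (real n + 1)) * (real k * s) \<le> (B1 * (real n + 1)) * (real n * H)"
    unfolding e1 by (simp add: algebra_simps)
  then have "real k * s \<le> real n * H"
    using B1p by (simp add: mult_le_cancel_left_pos add_pos_pos)
  then have "s \<le> real n / real k * H"
    using k0 by (simp add: field_simps)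
  then show ?thesis unfolding s_def a_def A_def .
qed

lemma orth_proj_props:
  fixes \<xi> :: "'a::euclidean_space set"
  assumes "subspace \<xi>"
  shows "orth_proj \<xi> x \<in> \<xi> \<and> (\<forall>v\<in>\<xi>. orthogonal (x - orth_proj \<xi> x) v)"
proof -
  obtain y z where y: "y \<in> span \<xi>" and z: "\<And>w. w \<in> span \<xi> \<Longrightarrow> orthogonal z w" and xyz: "x = y + z"
    using orthogonal_subspace_decomp_exists[of \<xi> x] by blast
  have sp: "span \<xi> = \<xi>" using assms by (simp add: span_eq_iff)
  have ex: "y \<in> \<xi> \<and> (\<forall>v\<in>\<xi>. orthogonal (x - y) v)" using y z xyz sp by auto
  have uniq: "y' = y" if "y' \<in> \<xi> \<and> (\<forall>v\<in>\<xi>. orthogonal (x - y') v)" for y'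
  proof -
    have "y - y' \<in> \<xi>" using that ex assms by (simp add: subspace_diff)
    moreover have "orthogonal (x - y') (y - y')" "orthogonal (x - y) (y - y')" using that ex calculation by auto
    ultimately have "inner (y - y') (y - y') = 0"
      unfolding orthogonal_def by (simp add: inner_diff_left inner_diff_right)
    then show ?thesis by simp
  qed
  have "orth_proj \<xi> x = y" unfolding orth_proj_def
    using the_equality[of "\<lambda>y. y \<in> \<xi> \<and> (\<forall>v\<in>\<xi>. orthogonal (x - y) v)" y, OF ex uniq] by blast
  then show ?thesis using ex by simp
qed

lemma inner_orth_proj:
  fixes \<xi> :: "'a::euclidean_space set"
  assumes "subspace \<xi>" "v \<in> \<xi>"
  shows "inner (orth_proj \<xi> x) v = inner x v"
proof -
  have "orthogonal (x - orth_proj \<xi> x) v" using orth_proj_props[OF assms(1)] assms(2) by blast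
  then show ?thesis unfolding orthogonal_def by (simp add: inner_diff_left)
qed

lemma exists_subspace_dim:
  fixes V :: "'a::euclidean_space set"
  assumes "dim V \<le> k" "k \<le> DIM('a)"
  obtains \<xi> where "subspace \<xi>" "dim \<xi> = k" "V \<subseteq> \<xi>"
proof -
  obtain B0 where B0: "B0 \<subseteq> V" "independent B0" "V \<subseteq> span B0" "card B0 = dim V"
    using basis_exists by blast
  obtain B where B: "B0 \<subseteq> B" "B \<subseteq> UNIV" "independent B" "UNIV \<subseteq> span B"
    using maximal_independent_subset_extend[of B0 UNIV] B0 by blast
  have fB: "finite B" using B independent_bound by blast
  have cB: "card B = DIM('a)"
    using basis_card_eq_dim[of B UNIV] B by simp
  have fB0: "finite B0" using fB B finite_subset by blast
  have "k - card B0 \<le> card (B - B0)" using cB B fB fB0 assms B0 by (simp add: card_Diff_subset)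
  then obtain C where C: "C \<subseteq> B - B0" "card C = k - card B0" "finite C"
    using obtain_subset_with_card_n by blast
  have indep: "independent (B0 \<union> C)" by (rule independent_mono[OF B(3)]) (use B C in auto)
  have card: "card (B0 \<union> C) = k" using C fB0 B0 assms
    by (subst card_Un_disjoint) auto
  show ?thesis
  proof
    show "subspace (span (B0 \<union> C))" by simp
    show "dim (span (B0 \<union> C)) = k" using indep card dim_span_eq_card_independent by metis
    show "V \<subseteq> span (B0 \<union> C)" using B0(3) span_mono[of B0 "B0 \<union> C"] by blast
  qed
qed


lemma avg_in_convex:
  fixes y :: "nat \<Rightarrow> 'a::real_vector"
  assumes "convex C" "finite S" "S \<noteq> {}" "\<And>i. i \<in> S \<Longrightarrow> y i \<in> C"
  shows "(1 / real (card S)) *\<^sub>R (\<Sum>i\<in>S. y i) \<in> C"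
proof -
  have "(\<Sum>i\<in>S. (1 / real (card S)) *\<^sub>R y i) \<in> C"
    by (rule convex_sum[OF assms(2,1)]) (use assms in auto)
  then show ?thesis by (simp add: scaleR_sum_right)
qed

lemma proj_bound:
  fixes K L :: "'a::euclidean_space set" and x v l :: "nat \<Rightarrow> 'a"
  assumes K: "convex K" and k: "1 \<le> k" "k \<le> n" "n = DIM('a)"
    and proj: "\<And>\<xi>. subspace \<xi> \<Longrightarrow> dim \<xi> = k \<Longrightarrow>
                 contains_translate (proj_set \<xi> L) (proj_set \<xi> K)"
    and x: "\<And>i. i \<le> n \<Longrightarrow> x i \<in> K"
    and l: "\<And>i. i \<le> n \<Longrightarrow> l i \<in> L"
    and lmax: "\<And>i l'. i \<le> n \<Longrightarrow> l' \<in> L \<Longrightarrow> inner l' (v i) \<le> inner (l i) (v i)"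
    and v0: "(\<Sum>i\<in>{0..n}. v i) = 0"
    and I: "I \<subseteq> {0..n}" "card I = k"
  shows "(\<Sum>i\<in>I. inner (x i) (v i)) - inner ((1 / real (n + 1 - k)) *\<^sub>R (\<Sum>j\<in>{0..n} - I. x j)) (\<Sum>i\<in>I. v i)
     \<le> (\<Sum>i\<in>{0..n}. inner (l i) (v i))"
proof -
  define A where "A = {0..n}"
  have fA: "finite A" unfolding A_def by simp
  have fI: "finite I" using I finite_subset by auto
  have "dim (v ` I) \<le> card (v ` I)" using dim_le_card[of "v ` I" "v ` I"] fI by (simp add: span_superset)
  also have "\<dots> \<le> k" using card_image_le[OF fI, of v] I by simp
  finally obtain \<xi> where \<xi>: "subspace \<xi>" "dim \<xi> = k" "v ` I \<subseteq> \<xi>"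
    using exists_subspace_dim[of "v ` I" k] k by blast
  obtain t where t: "(\<lambda>z. z + t) ` proj_set \<xi> K \<subseteq> proj_set \<xi> L"
    using proj[OF \<xi>(1,2)] unfolding contains_translate_def by blast
  have lift: "\<exists>l'\<in>L. \<forall>u\<in>\<xi>. inner l' u = inner z u + inner t u" if "z \<in> K" for z
  proof -
    have "orth_proj \<xi> z + t \<in> proj_set \<xi> L" using t that unfolding proj_set_def by blast
    then obtain l' where l': "l' \<in> L" "orth_proj \<xi> l' = orth_proj \<xi> z + t" unfolding proj_set_def by auto
    have "inner l' u = inner z u + inner t u" if "u \<in> \<xi>" for u
      using inner_orth_proj[OF \<xi>(1) that, of l'] inner_orth_proj[OF \<xi>(1) that, of z] l'(2)
      by (simp add: inner_add_left)
    then show ?thesis using l' by blast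
  qed
  define y where "y = (1 / real (n + 1 - k)) *\<^sub>R (\<Sum>j\<in>A - I. x j)"
  have cAI: "card (A - I) = n + 1 - k" using I fA unfolding A_def by (simp add: card_Diff_subset fI)
  have "card (A - I) > 0" using cAI k by simp
  then have "A - I \<noteq> {}" by (metis card.empty less_irrefl)
  then have yK: "y \<in> K" unfolding y_def using avg_in_convex[OF K, of "A - I" x] cAI fA x
    unfolding A_def by auto
  define u where "u = (\<Sum>i\<in>I. v i)"
  have uxi: "u \<in> \<xi>" unfolding u_def using \<xi> by (intro subspace_sum) auto
  have split: "(\<Sum>i\<in>A. f i) = (\<Sum>i\<in>I. f i) + (\<Sum>i\<in>A - I. f i)" for f :: "nat \<Rightarrow> 'b::comm_monoid_add"
    using sum.subset_diff[OF I(1)[folded A_def] fA] by (simp add: add.commute)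
  have uneg: "(\<Sum>i\<in>A - I. v i) = - u" using split[of v] v0 unfolding u_def A_def
    by (simp add: eq_neg_iff_add_eq_0 add.commute)
  have part1: "inner (x i) (v i) + inner t (v i) \<le> inner (l i) (v i)" if "i \<in> I" for i
  proof -
    have iA: "i \<le> n" using that I by auto
    obtain l' where "l' \<in> L" "\<forall>u\<in>\<xi>. inner l' u = inner (x i) u + inner t u" using lift[OF x[OF iA]] by blast
    moreover have "v i \<in> \<xi>" using \<xi>(3) that by blast
    ultimately show ?thesis using lmax[OF iA, of l'] by auto
  qed
  obtain l' where l': "l' \<in> L" "\<forall>u\<in>\<xi>. inner l' u = inner y u + inner t u" using lift[OF yK] by blast
  have part2: "- inner y u - inner t u \<le> (\<Sum>i\<in>A - I. inner (l i) (v i))"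
  proof -
    have "- inner y u - inner t u = - inner l' u" using l' uxi by auto
    also have "\<dots> = inner l' (\<Sum>i\<in>A - I. v i)" using uneg by simp
    also have "\<dots> = (\<Sum>i\<in>A - I. inner l' (v i))" by (simp add: inner_sum_right)
    also have "\<dots> \<le> (\<Sum>i\<in>A - I. inner (l i) (v i))"
      by (rule sum_mono) (use lmax l'(1) in \<open>auto simp: A_def\<close>)
    finally show ?thesis .
  qed
  have "(\<Sum>i\<in>I. inner (x i) (v i)) + inner t u \<le> (\<Sum>i\<in>I. inner (l i) (v i))"
    using sum_mono[of I "\<lambda>i. inner (x i) (v i) + inner t (v i)" "\<lambda>i. inner (l i) (v i)"] part1
    unfolding u_def by (simp add: sum.distrib inner_sum_right)
  then have "(\<Sum>i\<in>I. inner (x i) (v i)) - inner y u \<le> (\<Sum>i\<in>A. inner (l i) (v i))"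
    using part2 split[of "\<lambda>i. inner (l i) (v i)"] by linarith
  then show ?thesis unfolding y_def u_def A_def .
qed


lemma parallel_axis:
  fixes p :: "nat \<Rightarrow> 'a::real_inner" and S :: "nat set"
  assumes "finite S" "g = (1 / real (card S)) *\<^sub>R (\<Sum>i\<in>S. p i)" "S \<noteq> {}"
  shows "(\<Sum>i\<in>S. (norm (w - p i))\<^sup>2) = (\<Sum>i\<in>S. (norm (g - p i))\<^sup>2) + real (card S) * (norm (w - g))\<^sup>2"
proof -
  have cS: "real (card S) > 0" using assms by auto
  have sumg: "(\<Sum>i\<in>S. p i) = real (card S) *\<^sub>R g" using assms cS by simp
  have e: "(norm (w - p i))\<^sup>2 = (norm (w - g))\<^sup>2 + 2 * inner (w - g) (g - p i) + (norm (g - p i))\<^sup>2" for i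
  proof -
    have gen: "inner (a + b) (a + b) = inner a a + 2 * inner a b + inner b b" for a b :: 'a
      by (simp add: inner_add_left inner_add_right inner_commute)
    have "w - p i = (w - g) + (g - p i)" by simp
    then have "(norm (w - p i))\<^sup>2 = inner ((w - g) + (g - p i)) ((w - g) + (g - p i))"
      by (metis power2_norm_eq_inner)
    then show ?thesis unfolding gen by (simp add: power2_norm_eq_inner)
  qed
  have z: "(\<Sum>i\<in>S. inner (w - g) (g - p i)) = 0"
  proof -
    have "(\<Sum>i\<in>S. inner (w - g) (g - p i)) = inner (w - g) (\<Sum>i\<in>S. g - p i)"
      by (simp add: inner_sum_right)
    also have "(\<Sum>i\<in>S. g - p i) = real (card S) *\<^sub>R g - (\<Sum>i\<in>S. p i)"
      by (simp add: sum_subtractf sum_constant_scaleR)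
    also have "\<dots> = 0" using sumg by simp
    finally show ?thesis by simp
  qed
  have "(\<Sum>i\<in>S. (norm (w - p i))\<^sup>2) = (\<Sum>i\<in>S. (norm (w - g))\<^sup>2 + 2 * inner (w - g) (g - p i) + (norm (g - p i))\<^sup>2)"
    using e by simp
  also have "\<dots> = real (card S) * (norm (w - g))\<^sup>2 + 2 * (\<Sum>i\<in>S. inner (w - g) (g - p i)) + (\<Sum>i\<in>S. (norm (g - p i))\<^sup>2)"
    by (simp add: sum.distrib sum_distrib_left)
  finally show ?thesis using z by simp
qed

lemma core:
  fixes K L :: "'a::euclidean_space set" and x :: "nat \<Rightarrow> 'a"
  assumes K: "convex K" and L: "compact L" "convex L" "L \<noteq> {}"
    and k: "1 \<le> k" "k \<le> n" "n = DIM('a)"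
    and proj: "\<And>\<xi>. subspace \<xi> \<Longrightarrow> dim \<xi> = k \<Longrightarrow>
                 contains_translate (proj_set \<xi> L) (proj_set \<xi> K)"
    and x: "\<And>i. i \<le> n \<Longrightarrow> x i \<in> K"
  shows "\<exists>w. \<forall>i\<le>n. w \<in> (\<lambda>l. x i + (- (real n / real k)) *\<^sub>R l) ` L"
proof (rule ccontr)
  assume nw: "\<not> ?thesis"
  define c where "c = real n / real k"
  have c0: "c > 0" unfolding c_def using k by simp
  define A where "A = {0..n}"
  define C where "C i = (\<lambda>l. x i + (- c) *\<^sub>R l) ` L" for i
  have fA: "finite A" and cA: "card A = n + 1" and An: "A \<noteq> {}" unfolding A_def by auto
  have Cc: "compact (C i)" for i unfolding C_def by (rule compact_affinity[OF L(1)])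
  have Cv: "convex (C i)" for i unfolding C_def by (rule convex_affinity[OF L(2)])
  have Cn: "C i \<noteq> {}" for i unfolding C_def using L(3) by simp
  have Ccl: "closed (C i)" for i using Cc compact_imp_closed by blast
  define Hs where "Hs = convex hull (\<Union>i\<in>A. C i)"
  have Hc: "compact Hs" unfolding Hs_def using Cc fA by (intro compact_convex_hull compact_UN) auto
  have Hn: "Hs \<noteq> {}" unfolding Hs_def using Cn An by (simp add: hull_subset)
  define F where "F w = (\<Sum>i\<in>A. (dist w (closest_point (C i) w))\<^sup>2)" for w
  have Fc: "continuous_on Hs F" unfolding F_def
    by (intro continuous_intros continuous_on_closest_point Cv Ccl Cn)
  obtain w where wH: "w \<in> Hs" and wmin: "\<And>y. y \<in> Hs \<Longrightarrow> F w \<le> F y"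
    using continuous_attains_inf[OF Hc Hn Fc] by blast
  define p where "p i = closest_point (C i) w" for i
  have pC: "p i \<in> C i" for i unfolding p_def using closest_point_in_set[OF Ccl Cn] .
  define g where "g = (1 / real (card A)) *\<^sub>R (\<Sum>i\<in>A. p i)"
  have gH: "g \<in> Hs" unfolding g_def Hs_def
    by (rule avg_in_convex[OF convex_convex_hull fA An]) (use pC in \<open>auto intro: hull_inc\<close>)
  have "F g \<le> (\<Sum>i\<in>A. (dist g (p i))\<^sup>2)" unfolding F_def
    by (intro sum_mono power_mono closest_point_le[OF Ccl pC] zero_le_dist)
  also have "\<dots> = (\<Sum>i\<in>A. (norm (g - p i))\<^sup>2)" by (simp add: dist_norm)
  finally have Fg: "F g \<le> (\<Sum>i\<in>A. (norm (g - p i))\<^sup>2)" .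
  have Fw: "F w = (\<Sum>i\<in>A. (norm (w - p i))\<^sup>2)" unfolding F_def p_def by (simp add: dist_norm)
  have "real (card A) * (norm (w - g))\<^sup>2 \<le> 0"
    using parallel_axis[OF fA g_def An, of w] wmin[OF gH] Fg Fw by linarith
  moreover have cpos: "real (card A) > 0" using cA by simp
  ultimately have "(norm (w - g))\<^sup>2 \<le> 0" by (simp add: mult_le_0_iff)
  then have wg: "w = g" by simp
  define v where "v i = p i - w" for i
  have v0: "(\<Sum>i\<in>{0..n}. v i) = 0"
  proof -
    have "(\<Sum>i\<in>A. v i) = (\<Sum>i\<in>A. p i) - real (card A) *\<^sub>R w"
      unfolding v_def by (simp add: sum_subtractf sum_constant_scaleR)
    also have "(\<Sum>i\<in>A. p i) = real (card A) *\<^sub>R g" unfolding g_def using cA by simp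
    finally show ?thesis using wg A_def by simp
  qed
  have "\<exists>l. l \<in> L \<and> p i = x i + (- c) *\<^sub>R l" for i using pC[of i] unfolding C_def by blast
  then obtain l where lL: "\<And>i. l i \<in> L" and pl: "\<And>i. p i = x i + (- c) *\<^sub>R l i" by metis
  have lmax: "inner l' (v i) \<le> inner (l i) (v i)" if "l' \<in> L" for i l'
  proof -
    have yC: "x i + (- c) *\<^sub>R l' \<in> C i" unfolding C_def using that by blast
    have "inner (w - p i) ((x i + (- c) *\<^sub>R l') - p i) \<le> 0"
      using any_closest_point_dot[OF Cv Ccl pC yC] closest_point_le[OF Ccl] unfolding p_def by blast
    then have "c * inner (v i) (l' - l i) \<le> 0"
      unfolding v_def pl by (simp add: inner_diff_left inner_diff_right algebra_simps)
    then have "inner (v i) (l' - l i) \<le> 0" using c0 by (simp add: mult_le_0_iff)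
    then show ?thesis by (simp add: inner_diff_right inner_commute)
  qed
  have bound: "(\<Sum>i\<in>{0..n}. inner (x i) (v i)) \<le> c * (\<Sum>i\<in>{0..n}. inner (l i) (v i))"
    unfolding c_def
  proof (rule comb_ineq[OF k(1,2) v0])
    fix I assume "I \<subseteq> {0..n}" "card I = k"
    then show "(\<Sum>i\<in>I. inner (x i) (v i)) - inner ((1 / real (n + 1 - k)) *\<^sub>R (\<Sum>j\<in>{0..n} - I. x j)) (\<Sum>i\<in>I. v i)
        \<le> (\<Sum>i\<in>{0..n}. inner (l i) (v i))"
      by (intro proj_bound[OF K k proj x lL lmax v0]) auto
  qed
  have nz: "\<exists>i\<in>A. v i \<noteq> 0"
  proof (rule ccontr)
    assume "\<not> ?thesis"
    then have "\<forall>i\<le>n. w \<in> C i" using pC unfolding v_def A_def by force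
    then show False using nw unfolding C_def c_def by blast
  qed
  have pos: "(\<Sum>i\<in>A. inner (v i) (v i)) > 0"
  proof -
    obtain j where j: "j \<in> A" "v j \<noteq> 0" using nz by blast
    have "inner (v j) (v j) \<le> (\<Sum>i\<in>A. inner (v i) (v i))"
      by (rule member_le_sum[OF j(1)]) (auto simp: fA)
    moreover have "inner (v j) (v j) > 0" using j by simp
    ultimately show ?thesis by linarith
  qed
  have "(\<Sum>i\<in>A. inner (p i) (v i)) = (\<Sum>i\<in>A. inner (v i) (v i)) + inner w (\<Sum>i\<in>A. v i)"
  proof -
    have "inner (p i) (v i) = inner (v i) (v i) + inner w (v i)" for i
    proof -
      have "p i = v i + w" by (simp add: v_def)
      then show ?thesis by (simp add: inner_add_left inner_add_right inner_commute)
    qed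
    then show ?thesis by (simp add: sum.distrib inner_sum_right)
  qed
  also have "inner w (\<Sum>i\<in>A. v i) = 0" using v0 A_def by simp
  finally have "(\<Sum>i\<in>A. inner (p i) (v i)) > 0" using pos by simp
  moreover have "(\<Sum>i\<in>A. inner (p i) (v i)) = (\<Sum>i\<in>A. inner (x i) (v i)) - c * (\<Sum>i\<in>A. inner (l i) (v i))"
    unfolding pl by (simp add: inner_add_left inner_diff_left sum.distrib sum_distrib_left sum_subtractf)
  ultimately show False using bound A_def by simp
qed


lemma small_family:
  fixes K L :: "'a::euclidean_space set"
  assumes K: "convex K" and L: "compact L" "convex L" "L \<noteq> {}"
    and k: "1 \<le> k" "k \<le> n" "n = DIM('a)"
    and proj: "\<And>\<xi>. subspace \<xi> \<Longrightarrow> dim \<xi> = k \<Longrightarrow>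
                 contains_translate (proj_set \<xi> L) (proj_set \<xi> K)"
    and D: "D = (\<lambda>x. (\<lambda>l. x + (- (real n / real k)) *\<^sub>R l) ` L)"
    and t: "finite t" "t \<noteq> {}" "t \<subseteq> D ` K" "card t \<le> n + 1"
  shows "\<Inter>t \<noteq> {}"
proof -
  obtain ts where ts: "set ts = t" "distinct ts" using finite_distinct_list[OF t(1)] by blast
  have len: "length ts = card t" using ts distinct_card by metis
  have lpos: "length ts > 0" using ts t(2) by auto
  define idx where "idx i = min i (length ts - 1)" for i
  have "\<forall>i. \<exists>y\<in>K. D y = ts ! idx i"
  proof
    fix i
    have "ts ! idx i \<in> t" using ts lpos unfolding idx_def by (metis min.cobounded2 diff_less less_one nth_mem le_less_trans)
    then show "\<exists>y\<in>K. D y = ts ! idx i" using t(3) by blast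
  qed
  then obtain x where x: "\<And>i. x i \<in> K" and Dx: "\<And>i. D (x i) = ts ! idx i" by metis
  have xn: "\<And>i. i \<le> n \<Longrightarrow> x i \<in> K" using x by blast
  obtain w where w: "\<forall>i\<le>n. w \<in> (\<lambda>l. x i + (- (real n / real k)) *\<^sub>R l) ` L"
  proof -
    have "\<exists>w. \<forall>i\<le>n. w \<in> (\<lambda>l. x i + (- (real n / real k)) *\<^sub>R l) ` L"
      by (rule core[where x = x and K = K and L = L]) (fact K L k xn proj)+
    then show ?thesis using that by blast
  qed
  have "w \<in> \<Inter>t"
  proof
    fix T assume "T \<in> t"
    then obtain j where j: "j < length ts" "T = ts ! j" using ts by (metis in_set_conv_nth)
    have "idx j = j" unfolding idx_def using j by simp
    have "j \<le> n" using j len t(4) by simp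
    then have "w \<in> D (x j)" using w unfolding D by blast
    then show "w \<in> T" using Dx[of j] j \<open>idx j = j\<close> by simp
  qed
  then show ?thesis by blast
qed

theorem corollary6p2:
  fixes K L :: "'a::euclidean_space set" and d :: nat
  assumes n2: "DIM('a) \<ge> 2"
    and K: "compact K" "convex K"
    and L: "compact L" "convex L"
    and d: "1 \<le> d" "d \<le> DIM('a) - 1"
    and proj: "\<And>\<xi>. subspace \<xi> \<Longrightarrow> dim \<xi> = DIM('a) - d \<Longrightarrow>
                 contains_translate (proj_set \<xi> L) (proj_set \<xi> K)"
  shows "measure lebesgue K \<le>
           (real DIM('a) / real (DIM('a) - d)) ^ DIM('a) * measure lebesgue L"
proof (cases "K = {}")
  case True
  then show ?thesis by simp
next
  case Kne: False
  define n where "n = DIM('a)"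
  define k where "k = n - d"
  define c where "c = real n / real k"
  have k: "1 \<le> k" "k \<le> n" "n = DIM('a)" unfolding k_def n_def using d n2 by auto
  have c0: "c > 0" unfolding c_def using k by simp
  have proj': "\<And>\<xi>. subspace \<xi> \<Longrightarrow> dim \<xi> = k \<Longrightarrow> contains_translate (proj_set \<xi> L) (proj_set \<xi> K)"
    using proj unfolding k_def n_def by blast
  have Lne: "L \<noteq> {}"
  proof -
    have kD: "k \<le> DIM('a)" using k by simp
    have dim0: "dim ({}::'a set) \<le> k" by simp
    obtain \<xi> :: "'a set" where \<xi>: "subspace \<xi>" "dim \<xi> = k" "{} \<subseteq> \<xi>"
      by (rule exists_subspace_dim[OF dim0 kD]) blast
    have "contains_translate (proj_set \<xi> L) (proj_set \<xi> K)" by (rule proj'[OF \<xi>(1,2)])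
    then obtain t where t: "(\<lambda>z. z + t) ` proj_set \<xi> K \<subseteq> proj_set \<xi> L"
      unfolding contains_translate_def by (elim exE)
    obtain z where "z \<in> K" using Kne by blast
    then have "orth_proj \<xi> z + t \<in> proj_set \<xi> L" using t unfolding proj_set_def by blast
    then show ?thesis unfolding proj_set_def by blast
  qed
  define D where "D = (\<lambda>x. (\<lambda>l. x + (- (real n / real k)) *\<^sub>R l) ` L)"
  have Dcl: "closed (D x)" for x unfolding D_def
    using compact_affinity[OF L(1)] compact_imp_closed by blast
  have Dcv: "convex (D x)" for x unfolding D_def using convex_affinity[OF L(2)] by blast
  have Dcp: "compact (D x)" for x unfolding D_def using compact_affinity[OF L(1)] by blast
  have small: "\<Inter>t \<noteq> {}" if "finite t" "t \<noteq> {}" "t \<subseteq> D ` K" "card t \<le> n + 1" for t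
    using small_family[OF K(2) L Lne k proj' D_def that] .
  obtain x0 where x0: "x0 \<in> K" using Kne by blast
  have "D x0 \<inter> (\<Inter>x\<in>K. D x) \<noteq> {}"
  proof (rule compact_imp_fip_image[OF Dcp Dcl])
    fix K' assume K': "finite K'" "K' \<subseteq> K"
    define t where "t = D ` insert x0 K'"
    have tf: "finite t" "t \<noteq> {}" "t \<subseteq> D ` K" unfolding t_def using K' x0 by auto
    have "\<Inter>t \<noteq> {}"
    proof (cases "card t \<le> n + 1")
      case True then show ?thesis using small tf by blast
    next
      case False
      show ?thesis
      proof (rule Helly)
        show "DIM('a) + 1 \<le> card t" using False k by simp
        show "\<forall>s\<in>t. convex s" using Dcv unfolding t_def by blast
        fix t' assume t': "t' \<subseteq> t" "card t' = DIM('a) + 1"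
        have "finite t'" using t'(1) tf(1) by (rule finite_subset)
        moreover have "t' \<noteq> {}" using t'(2) by auto
        moreover have "t' \<subseteq> D ` K" using t'(1) tf(3) by (rule subset_trans)
        moreover have "card t' \<le> n + 1" using t'(2) k by simp
        ultimately show "\<Inter>t' \<noteq> {}" by (rule small)
      qed
    qed
    then show "D x0 \<inter> (\<Inter>x\<in>K'. D x) \<noteq> {}" unfolding t_def by simp
  qed
  then obtain w where w: "\<And>x. x \<in> K \<Longrightarrow> w \<in> D x" by blast
  have sub: "K \<subseteq> (\<lambda>l. c *\<^sub>R l + w) ` L"
  proof
    fix x assume "x \<in> K"
    then obtain l where "l \<in> L" "w = x + (- c) *\<^sub>R l" using w unfolding D_def c_def by blast
    then have "x = c *\<^sub>R l + w" by (simp add: algebra_simps)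
    then show "x \<in> (\<lambda>l. c *\<^sub>R l + w) ` L" using \<open>l \<in> L\<close> by blast
  qed
  have "measure lebesgue K \<le> measure lebesgue ((\<lambda>l. c *\<^sub>R l + w) ` L)"
  proof (rule measure_mono_fmeasurable[OF sub])
    show "K \<in> sets lebesgue" using lmeasurable_compact[OF K(1)] by (simp add: fmeasurable_def)
    have "compact ((\<lambda>l. c *\<^sub>R l + w) ` L)"
      using compact_affinity[OF L(1), of w c] by (simp add: add.commute)
    then show "(\<lambda>l. c *\<^sub>R l + w) ` L \<in> lmeasurable" by (rule lmeasurable_compact)
  qed
  also have "\<dots> = \<bar>c\<bar> ^ DIM('a) * measure lebesgue L" by (rule measure_lebesgue_affine)
  finally show ?thesis using c0 unfolding c_def n_def k_def by simp
qed

end
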